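(* If $G$ is a graph with no induced subgraph isomorphic to $2K_2$, then $\operatorname{reg}(G)\le\frac{1}{2}\Gamma(G)+2$.
   Context: $2K_2$ is the disjoint union of two edges. The maximum privacy degree is $\Gamma(G)=\max\{|N_G[x]\setminus N_G[y]|: x,y\in V(G),\ xy\in E(G)\}$ (taken over both orderings of each edge; $0$ if $G$ has no edges), where $N_G[x]=N_G(x)\cup\{x\}$. $\operatorname{reg}(G)=\max\{j\ge0:\widetilde H_{j-1}(\operatorname{Ind}(G[S]);\Bbbk)\neq0\text{ for some }S\subseteq V(G)\}$ over a field $\Bbbk$, $\operatorname{Ind}$ the independence complex. *)

theory Defs
  imports Complex_Main
begin

definition simple_graph :: "'a set \<Rightarrow> ('a \<Rightarrow> 'a \<Rightarrow> bool) \<Rightarrow> bool" where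
  "simple_graph V E \<longleftrightarrow> finite V \<and> (\<forall>x y. E x y \<longrightarrow> x \<in> V \<and> y \<in> V \<and> x \<noteq> y \<and> E y x)"

definition twoK2_free :: "'a set \<Rightarrow> ('a \<Rightarrow> 'a \<Rightarrow> bool) \<Rightarrow> bool" where
  "twoK2_free V E \<longleftrightarrow> \<not> (\<exists>a\<in>V. \<exists>b\<in>V. \<exists>c\<in>V. \<exists>d\<in>V.
      distinct [a, b, c, d] \<and> E a b \<and> E c d \<and>
      \<not> E a c \<and> \<not> E a d \<and> \<not> E b c \<and> \<not> E b d)"

definition closed_nbhd :: "'a set \<Rightarrow> ('a \<Rightarrow> 'a \<Rightarrow> bool) \<Rightarrow> 'a \<Rightarrow> 'a set" where
  "closed_nbhd V E x = {y \<in> V. E x y} \<union> {x}"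

definition max_privacy_degree :: "'a set \<Rightarrow> ('a \<Rightarrow> 'a \<Rightarrow> bool) \<Rightarrow> nat" where
  "max_privacy_degree V E =
     Max ({0} \<union> {card (closed_nbhd V E x - closed_nbhd V E y) | x y. x \<in> V \<and> y \<in> V \<and> E x y})"

definition ind_complex :: "('a \<Rightarrow> 'a \<Rightarrow> bool) \<Rightarrow> 'a set \<Rightarrow> 'a set set" where
  "ind_complex E S = {\<sigma>. \<sigma> \<subseteq> S \<and> (\<forall>x\<in>\<sigma>. \<forall>y\<in>\<sigma>. \<not> E x y)}"

text \<open>Simplicial chains: a chain of faces of cardinality j (dimension j-1) with coefficients in 'k.\<close>
definition is_chain :: "'a set set \<Rightarrow> nat \<Rightarrow> ('a set \<Rightarrow> 'k::zero) \<Rightarrow> bool" where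
  "is_chain \<Delta> j c \<longleftrightarrow> (\<forall>\<sigma>. c \<sigma> \<noteq> 0 \<longrightarrow> \<sigma> \<in> \<Delta> \<and> card \<sigma> = j)"

text \<open>Simplicial boundary, with the orientation induced by the linear order of vertices:
  removing v from \<tau> = insert v \<sigma> has sign (-1)^(number of elements of \<tau> below v).
  The boundary of a vertex is the empty face (augmented / reduced complex).\<close>
definition boundary :: "'a::linorder set set \<Rightarrow> ('a set \<Rightarrow> 'k::field) \<Rightarrow> 'a set \<Rightarrow> 'k" where
  "boundary \<Delta> c \<sigma> =
     (\<Sum>v \<in> {v. v \<notin> \<sigma> \<and> insert v \<sigma> \<in> \<Delta>}. (-1) ^ card {u \<in> \<sigma>. u < v} * c (insert v \<sigma>))"

text \<open>Reduced homology group H~_{j-1}(\<Delta>; k) is nonzero: there is a (j-1)-cycle that is not a boundary.\<close>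
definition red_hom_nonzero :: "'k::field itself \<Rightarrow> 'a::linorder set set \<Rightarrow> nat \<Rightarrow> bool" where
  "red_hom_nonzero K \<Delta> j \<longleftrightarrow>
     (\<exists>z :: 'a set \<Rightarrow> 'k. is_chain \<Delta> j z \<and>
        (\<forall>\<sigma>. card \<sigma> + 1 = j \<longrightarrow> boundary \<Delta> z \<sigma> = 0) \<and>
        \<not> (\<exists>c :: 'a set \<Rightarrow> 'k. is_chain \<Delta> (j + 1) c \<and>
              (\<forall>\<sigma>. card \<sigma> = j \<longrightarrow> z \<sigma> = boundary \<Delta> c \<sigma>)))"

text \<open>Castelnuovo--Mumford regularity of the edge ideal via Hochster's formula, over the field 'k.\<close>
definition reg :: "'k::field itself \<Rightarrow> 'a::linorder set \<Rightarrow> ('a \<Rightarrow> 'a \<Rightarrow> bool) \<Rightarrow> nat" where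
  "reg K V E = Sup {j. \<exists>S \<subseteq> V. red_hom_nonzero K (ind_complex E S) j}"

end

theory Submission
  imports Defs
begin

lemma ic_sub: "\<sigma> \<in> ind_complex E S \<Longrightarrow> \<sigma> \<subseteq> S"
  by (simp add: ind_complex_def)
lemma ic_fin: "finite S \<Longrightarrow> \<sigma> \<in> ind_complex E S \<Longrightarrow> finite \<sigma>"
  by (meson finite_subset ic_sub)
lemma ic_down: "\<sigma> \<in> ind_complex E S \<Longrightarrow> \<tau> \<subseteq> \<sigma> \<Longrightarrow> \<tau> \<in> ind_complex E S"
  by (auto simp add: ind_complex_def)
lemma ic_mono: "T \<subseteq> S \<Longrightarrow> ind_complex E T \<subseteq> ind_complex E S"
  by (auto simp add: ind_complex_def)
lemma idx_fin: "finite S \<Longrightarrow> finite {v. v \<notin> \<sigma> \<and> insert v \<sigma> \<in> ind_complex E S}"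
  by (rule finite_subset[of _ S]) (auto dest: ic_sub)

lemma bd_chain:
  assumes "finite S" "is_chain (ind_complex E S) (Suc j) c"
  shows "is_chain (ind_complex E S) j (boundary (ind_complex E S) c)"
  unfolding is_chain_def
proof (intro allI impI)
  fix \<sigma> assume "boundary (ind_complex E S) c \<sigma> \<noteq> 0"
  then obtain v where v: "v \<notin> \<sigma>" "insert v \<sigma> \<in> ind_complex E S" "c (insert v \<sigma>) \<noteq> 0"
    unfolding boundary_def by (metis (no_types, lifting) mem_Collect_eq mult_zero_right sum.neutral)
  then have "card (insert v \<sigma>) = Suc j" using assms(2) by (auto simp: is_chain_def)
  moreover have "finite \<sigma>" using ic_fin[OF assms(1) v(2)] by simp
  ultimately show "\<sigma> \<in> ind_complex E S \<and> card \<sigma> = j"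
    using v ic_down by fastforce
qed

lemma bd_chain0:
  assumes "finite S" "is_chain (ind_complex E S) 0 c"
  shows "boundary (ind_complex E S) c \<sigma> = 0"
  unfolding boundary_def
proof (rule sum.neutral, intro ballI)
  fix v assume "v \<in> {v. v \<notin> \<sigma> \<and> insert v \<sigma> \<in> ind_complex E S}"
  then have "insert v \<sigma> \<in> ind_complex E S" by simp
  then have "finite (insert v \<sigma>)" by (rule ic_fin[OF assms(1)])
  then have "c (insert v \<sigma>) = 0" using assms(2) \<open>insert v \<sigma> \<in> ind_complex E S\<close> by (auto simp: is_chain_def)
  then show "(- 1) ^ card {u \<in> \<sigma>. u < v} * c (insert v \<sigma>) = 0" by simp
qed

lemma bd_restrict:
  assumes "finite S" "T \<subseteq> S" "is_chain (ind_complex E T) j c"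
  shows "boundary (ind_complex E S) c = boundary (ind_complex E T) c"
proof
  fix \<sigma>
  show "boundary (ind_complex E S) c \<sigma> = boundary (ind_complex E T) c \<sigma>"
    unfolding boundary_def
  proof (rule sum.mono_neutral_cong_right)
    show "finite {v. v \<notin> \<sigma> \<and> insert v \<sigma> \<in> ind_complex E S}" using idx_fin[OF assms(1)] .
    show "{v. v \<notin> \<sigma> \<and> insert v \<sigma> \<in> ind_complex E T} \<subseteq> {v. v \<notin> \<sigma> \<and> insert v \<sigma> \<in> ind_complex E S}"
      using ic_mono[OF assms(2)] by auto
    show "\<forall>i\<in>{v. v \<notin> \<sigma> \<and> insert v \<sigma> \<in> ind_complex E S} - {v. v \<notin> \<sigma> \<and> insert v \<sigma> \<in> ind_complex E T}.
       (- 1) ^ card {u \<in> \<sigma>. u < i} * c (insert i \<sigma>) = 0"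
      using assms(3) by (auto simp: is_chain_def)
  qed auto
qed

lemma bd_add: "boundary D (\<lambda>\<sigma>. a \<sigma> + b \<sigma>) \<sigma> = boundary D a \<sigma> + boundary D b \<sigma>"
  by (simp add: boundary_def distrib_left sum.distrib)
lemma bd_diff: "boundary D (\<lambda>\<sigma>. a \<sigma> - b \<sigma>) \<sigma> = boundary D a \<sigma> - boundary D b \<sigma>"
  by (simp add: boundary_def right_diff_distrib sum_subtractf)
lemma bd_zero: "boundary D (\<lambda>\<sigma>. 0) \<sigma> = 0"
  by (simp add: boundary_def)

definition sg :: "'a::linorder \<Rightarrow> 'a set \<Rightarrow> 'k::field" where
  "sg x \<rho> = (-1) ^ card {u \<in> \<rho>. u < x}"

definition cone :: "'a::linorder \<Rightarrow> ('a set \<Rightarrow> 'k::field) \<Rightarrow> 'a set \<Rightarrow> 'k" where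
  "cone x c \<tau> = (if x \<in> \<tau> then sg x (\<tau> - {x}) * c (\<tau> - {x}) else 0)"

lemma sg_sq: "sg x \<rho> * sg x \<rho> = (1::'k::field)"
  by (simp add: sg_def power_mult_distrib[symmetric])

lemma bd_sg: "boundary D c \<sigma> = (\<Sum>v \<in> {v. v \<notin> \<sigma> \<and> insert v \<sigma> \<in> D}. sg v \<sigma> * c (insert v \<sigma>))"
  by (simp add: boundary_def sg_def)

lemma sg_swap:
  assumes "finite \<rho>" "x \<notin> \<rho>" "v \<notin> \<rho>" "v \<noteq> x"
  shows "sg v (insert x \<rho>) * sg x (insert v \<rho>) = - (sg x \<rho> * sg v \<rho> :: 'k::field)"
proof (cases "x < v")
  case True
  have 1: "{u \<in> insert x \<rho>. u < v} = insert x {u \<in> \<rho>. u < v}" using True by auto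
  have 2: "{u \<in> insert v \<rho>. u < x} = {u \<in> \<rho>. u < x}" using True by auto
  show ?thesis unfolding sg_def 1 2 using assms by simp
next
  case False
  then have F: "v < x" using assms(4) by auto
  have 1: "{u \<in> insert x \<rho>. u < v} = {u \<in> \<rho>. u < v}" using F by auto
  have 2: "{u \<in> insert v \<rho>. u < x} = insert v {u \<in> \<rho>. u < x}" using F by auto
  show ?thesis unfolding sg_def 1 2 using assms by simp
qed

lemma cone_id:
  fixes c :: "'a::linorder set \<Rightarrow> 'k::field"
  assumes S: "finite S"
    and supp: "\<And>\<sigma>. c \<sigma> \<noteq> 0 \<Longrightarrow> x \<notin> \<sigma> \<and> insert x \<sigma> \<in> ind_complex E S"
  shows "boundary (ind_complex E S) (cone x c) \<sigma> + cone x (boundary (ind_complex E S) c) \<sigma> = c \<sigma>"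
proof (cases "x \<in> \<sigma>")
  case False
  let ?D = "ind_complex E S"
  have "boundary ?D (cone x c) \<sigma> = (\<Sum>v \<in> {v. v \<notin> \<sigma> \<and> insert v \<sigma> \<in> ?D}. (if v = x then c \<sigma> else 0))"
    unfolding bd_sg
  proof (rule sum.cong)
    fix v assume "v \<in> {v. v \<notin> \<sigma> \<and> insert v \<sigma> \<in> ?D}"
    show "sg v \<sigma> * cone x c (insert v \<sigma>) = (if v = x then c \<sigma> else 0)"
    proof (cases "v = x")
      case True
      then have "insert v \<sigma> - {x} = \<sigma>" using False by auto
      then show ?thesis using True by (simp add: cone_def mult.assoc[symmetric] sg_sq)
    qed (use False in \<open>simp add: cone_def\<close>)
  qed simp
  also have "\<dots> = c \<sigma>"
    using supp[of \<sigma>] False idx_fin[OF S, of \<sigma> E] by (auto simp: sum.delta)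
  finally show ?thesis using False by (simp add: cone_def)
next
  case True
  let ?D = "ind_complex E S"
  define \<rho> where "\<rho> = \<sigma> - {x}"
  have \<sigma>: "\<sigma> = insert x \<rho>" "x \<notin> \<rho>" using True by (auto simp: \<rho>_def)
  have c\<sigma>: "c \<sigma> = 0" using supp[of \<sigma>] True by blast
  have "boundary ?D (cone x c) \<sigma> = (\<Sum>v \<in> {v. v \<notin> \<sigma> \<and> insert v \<sigma> \<in> ?D}. sg v \<sigma> * (sg x (insert v \<rho>) * c (insert v \<rho>)))"
    unfolding bd_sg
  proof (rule sum.cong)
    fix v assume "v \<in> {v. v \<notin> \<sigma> \<and> insert v \<sigma> \<in> ?D}"
    then have e: "insert v \<sigma> - {x} = insert v \<rho>" using \<sigma> by auto
    have "x \<in> insert v \<sigma>" using True by simp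
    then have "cone x c (insert v \<sigma>) = sg x (insert v \<rho>) * c (insert v \<rho>)"
      unfolding cone_def e by (rule if_P)
    then show "sg v \<sigma> * cone x c (insert v \<sigma>) = sg v \<sigma> * (sg x (insert v \<rho>) * c (insert v \<rho>))"
      by simp
  qed simp
  also have "\<dots> = (\<Sum>v \<in> {v. v \<notin> \<rho> \<and> insert v \<rho> \<in> ?D}. - (sg x \<rho> * (sg v \<rho> * c (insert v \<rho>))))"
  proof (rule sum.mono_neutral_cong_right[symmetric])
    show "finite {v. v \<notin> \<rho> \<and> insert v \<rho> \<in> ?D}" using idx_fin[OF S] .
    show "{v. v \<notin> \<sigma> \<and> insert v \<sigma> \<in> ?D} \<subseteq> {v. v \<notin> \<rho> \<and> insert v \<rho> \<in> ?D}"
    proof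
      fix v assume v: "v \<in> {v. v \<notin> \<sigma> \<and> insert v \<sigma> \<in> ?D}"
      have "insert v \<rho> \<subseteq> insert v \<sigma>" using \<sigma>(1) by blast
      then show "v \<in> {v. v \<notin> \<rho> \<and> insert v \<rho> \<in> ?D}" using v \<sigma>(1) ic_down[of "insert v \<sigma>" E S] by auto
    qed
    show "\<forall>v\<in>{v. v \<notin> \<rho> \<and> insert v \<rho> \<in> ?D} - {v. v \<notin> \<sigma> \<and> insert v \<sigma> \<in> ?D}.
        - (sg x \<rho> * (sg v \<rho> * c (insert v \<rho>))) = 0"
    proof
      fix v assume v: "v \<in> {v. v \<notin> \<rho> \<and> insert v \<rho> \<in> ?D} - {v. v \<notin> \<sigma> \<and> insert v \<sigma> \<in> ?D}"
      have "c (insert v \<rho>) = 0"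
      proof (cases "v = x")
        case True then show ?thesis using c\<sigma> \<sigma> by simp
      next
        case False
        then have "insert v \<sigma> \<notin> ?D" using v \<sigma> by auto
        then show ?thesis using supp[of "insert v \<rho>"] \<sigma> by (metis insert_commute)
      qed
      then show "- (sg x \<rho> * (sg v \<rho> * c (insert v \<rho>))) = 0" by simp
    qed
    fix v assume v: "v \<in> {v. v \<notin> \<sigma> \<and> insert v \<sigma> \<in> ?D}"
    then have "finite \<rho>" using ic_fin[OF S, of "insert v \<sigma>" E] \<sigma> by auto
    then have "sg v \<sigma> * sg x (insert v \<rho>) = - (sg x \<rho> * sg v \<rho> :: 'k)"
      using sg_swap[of \<rho> x v] v \<sigma> by auto
    then show "- (sg x \<rho> * (sg v \<rho> * c (insert v \<rho>))) = sg v \<sigma> * (sg x (insert v \<rho>) * c (insert v \<rho>))"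
    proof -
      assume h: "sg v \<sigma> * sg x (insert v \<rho>) = - (sg x \<rho> * sg v \<rho> :: 'k)"
      have "sg v \<sigma> * (sg x (insert v \<rho>) * c (insert v \<rho>)) = (sg v \<sigma> * sg x (insert v \<rho>)) * c (insert v \<rho>)"
        by (rule mult.assoc[symmetric])
      also have "\<dots> = - (sg x \<rho> * (sg v \<rho> * c (insert v \<rho>)))" unfolding h by (simp add: mult.assoc)
      finally show ?thesis by (rule sym)
    qed
  qed
  also have "\<dots> = - (sg x \<rho> * (\<Sum>v \<in> {v. v \<notin> \<rho> \<and> insert v \<rho> \<in> ?D}. sg v \<rho> * c (insert v \<rho>)))"
    by (simp only: sum_distrib_left sum_negf)
  also have "\<dots> = - cone x (boundary ?D c) \<sigma>"
  proof -
    have "cone x (boundary ?D c) \<sigma> = sg x \<rho> * boundary ?D c \<rho>"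
      unfolding cone_def \<rho>_def using True by (rule if_P)
    then show ?thesis unfolding bd_sg by simp
  qed
  finally show ?thesis using c\<sigma> by simp
qed


definition acyc :: "'k::field itself \<Rightarrow> ('a::linorder \<Rightarrow> 'a \<Rightarrow> bool) \<Rightarrow> 'a set \<Rightarrow> nat \<Rightarrow> bool" where
  "acyc K E S j \<longleftrightarrow> (\<forall>z :: 'a set \<Rightarrow> 'k. is_chain (ind_complex E S) j z \<and> (\<forall>\<sigma>. boundary (ind_complex E S) z \<sigma> = 0)
      \<longrightarrow> (\<exists>c. is_chain (ind_complex E S) (Suc j) c \<and> (\<forall>\<sigma>. boundary (ind_complex E S) c \<sigma> = z \<sigma>)))"

lemma chain_mono: "is_chain (ind_complex E T) j c \<Longrightarrow> T \<subseteq> S \<Longrightarrow> is_chain (ind_complex E S) j c"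
  using ic_mono unfolding is_chain_def by blast

lemma sg_nz: "sg x \<rho> \<noteq> (0::'k::field)"
  by (simp add: sg_def)

lemma decomp:
  fixes z :: "'a::linorder set \<Rightarrow> 'k::field" and x :: 'a
  assumes S: "finite S"
    and zc: "is_chain (ind_complex E S) j z"
    and zb: "\<And>\<sigma>. boundary (ind_complex E S) z \<sigma> = 0"
    and z0_def: "z0 = (\<lambda>\<sigma>. if x \<in> \<sigma> then 0 else z \<sigma>)"
    and w_def: "w = (\<lambda>\<rho>. if x \<in> \<rho> then 0 else sg x \<rho> * z (insert x \<rho>))"
  shows "z = (\<lambda>\<sigma>. z0 \<sigma> + cone x w \<sigma>)"
    and "\<And>\<rho>. w \<rho> \<noteq> 0 \<Longrightarrow> x \<notin> \<rho> \<and> insert x \<rho> \<in> ind_complex E S \<and> Suc (card \<rho>) = j \<and> finite \<rho>"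
    and "\<And>\<rho>. boundary (ind_complex E S) w \<rho> = 0"
    and "\<And>\<rho>. boundary (ind_complex E S) z0 \<rho> = - w \<rho>"
    and "\<And>\<sigma>. z0 \<sigma> \<noteq> 0 \<Longrightarrow> x \<notin> \<sigma> \<and> \<sigma> \<in> ind_complex E S \<and> card \<sigma> = j"
proof -
  let ?D = "ind_complex E S"
  show A: "z = (\<lambda>\<sigma>. z0 \<sigma> + cone x w \<sigma>)"
  proof
    fix \<sigma> show "z \<sigma> = z0 \<sigma> + cone x w \<sigma>"
    proof (cases "x \<in> \<sigma>")
      case True
      then have e: "insert x (\<sigma> - {x}) = \<sigma>" by auto
      have "cone x w \<sigma> = sg x (\<sigma> - {x}) * (sg x (\<sigma> - {x}) * z \<sigma>)"
        using True by (simp add: cone_def w_def insert_absorb)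
      also have "\<dots> = z \<sigma>" by (simp add: mult.assoc[symmetric] sg_sq)
      finally show ?thesis using True by (simp add: z0_def)
    qed (simp add: z0_def cone_def)
  qed
  show B: "\<And>\<rho>. w \<rho> \<noteq> 0 \<Longrightarrow> x \<notin> \<rho> \<and> insert x \<rho> \<in> ?D \<and> Suc (card \<rho>) = j \<and> finite \<rho>"
  proof -
    fix \<rho> assume "w \<rho> \<noteq> 0"
    then have h: "x \<notin> \<rho>" "z (insert x \<rho>) \<noteq> 0" by (auto simp: w_def split: if_splits)
    then have "insert x \<rho> \<in> ?D" "card (insert x \<rho>) = j" using zc by (auto simp: is_chain_def)
    moreover have "finite \<rho>" using ic_fin[OF S \<open>insert x \<rho> \<in> ?D\<close>] by simp
    ultimately show "x \<notin> \<rho> \<and> insert x \<rho> \<in> ?D \<and> Suc (card \<rho>) = j \<and> finite \<rho>" using h by simp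
  qed
  have CI: "\<And>\<sigma>. boundary ?D (cone x w) \<sigma> + cone x (boundary ?D w) \<sigma> = w \<sigma>"
    by (rule cone_id[OF S]) (use B in blast)
  have Z: "\<And>\<sigma>. boundary ?D z0 \<sigma> + boundary ?D (cone x w) \<sigma> = 0"
    using zb A bd_add by metis
  have z0x: "\<And>\<sigma>. x \<in> \<sigma> \<Longrightarrow> boundary ?D z0 \<sigma> = 0"
    unfolding bd_sg by (rule sum.neutral) (simp add: z0_def)
  show C: "\<And>\<rho>. boundary ?D w \<rho> = 0"
  proof -
    fix \<rho> show "boundary ?D w \<rho> = 0"
    proof (cases "x \<in> \<rho>")
      case True
      then show ?thesis unfolding bd_sg by (intro sum.neutral) (simp add: w_def)
    next
      case False
      have "boundary ?D (cone x w) (insert x \<rho>) = 0" using Z[of "insert x \<rho>"] z0x[of "insert x \<rho>"] by simp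
      then have "cone x (boundary ?D w) (insert x \<rho>) = 0" using CI[of "insert x \<rho>"] by (simp add: w_def)
      then have "sg x \<rho> * boundary ?D w \<rho> = 0" using False by (simp add: cone_def)
      then show ?thesis by (simp add: sg_nz)
    qed
  qed
  show "\<And>\<rho>. boundary ?D z0 \<rho> = - w \<rho>"
  proof -
    fix \<rho>
    have "cone x (boundary ?D w) \<rho> = 0" using C by (simp add: cone_def)
    then show "boundary ?D z0 \<rho> = - w \<rho>" using Z[of \<rho>] CI[of \<rho>] by (simp add: eq_neg_iff_add_eq_0)
  qed
  show "\<And>\<sigma>. z0 \<sigma> \<noteq> 0 \<Longrightarrow> x \<notin> \<sigma> \<and> \<sigma> \<in> ?D \<and> card \<sigma> = j"
    using zc by (auto simp: z0_def is_chain_def split: if_splits)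
qed


lemma ins_ic: "\<sigma> \<in> ind_complex E S \<Longrightarrow> x \<in> S \<Longrightarrow> \<not> E x x \<Longrightarrow> (\<forall>v\<in>\<sigma>. \<not> E x v \<and> \<not> E v x)
   \<Longrightarrow> insert x \<sigma> \<in> ind_complex E S"
  by (auto simp: ind_complex_def)

lemma cone_chain:
  assumes S: "finite S"
    and h: "\<And>\<sigma>. c \<sigma> \<noteq> 0 \<Longrightarrow> \<sigma> \<in> ind_complex E S \<and> card \<sigma> = j \<and> x \<notin> \<sigma> \<and> insert x \<sigma> \<in> ind_complex E S"
  shows "is_chain (ind_complex E S) (Suc j) (cone x c)"
  unfolding is_chain_def
proof (intro allI impI)
  fix \<tau> assume "cone x c \<tau> \<noteq> 0"
  then have t: "x \<in> \<tau>" "c (\<tau> - {x}) \<noteq> 0" by (auto simp: cone_def split: if_splits)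
  then have e: "insert x (\<tau> - {x}) = \<tau>" by auto
  from h[OF t(2)] have "\<tau> \<in> ind_complex E S" "card (\<tau> - {x}) = j" using e by auto
  moreover have "finite \<tau>" using ic_fin[OF S \<open>\<tau> \<in> ind_complex E S\<close>] .
  moreover have "card \<tau> > 0" using t(1) \<open>finite \<tau>\<close> card_gt_0_iff by blast
  ultimately show "\<tau> \<in> ind_complex E S \<and> card \<tau> = Suc j"
    using t(1) by simp
qed

lemma cone_case:
  fixes K :: "'k::field itself"
  assumes S: "finite S" and xS: "x \<in> S" and iso: "\<forall>v\<in>S. \<not> E x v \<and> \<not> E v x" and nx: "\<not> E x x"
  shows "acyc K E S j"
  unfolding acyc_def
proof (intro allI impI, elim conjE)
  let ?D = "ind_complex E S"
  fix z :: "'a set \<Rightarrow> 'k"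
  assume zc: "is_chain ?D j z" and zb: "\<forall>\<sigma>. boundary ?D z \<sigma> = 0"
  define z0 where "z0 = (\<lambda>\<sigma>. if x \<in> \<sigma> then 0 else z \<sigma>)"
  define w where "w = (\<lambda>\<rho>. if x \<in> \<rho> then 0 else sg x \<rho> * z (insert x \<rho>))"
  note D = decomp[OF S zc zb[rule_format] z0_def w_def]
  have supp: "\<And>\<sigma>. z0 \<sigma> \<noteq> 0 \<Longrightarrow> \<sigma> \<in> ?D \<and> card \<sigma> = j \<and> x \<notin> \<sigma> \<and> insert x \<sigma> \<in> ?D"
  proof -
    fix \<sigma> assume "z0 \<sigma> \<noteq> 0"
    then have "x \<notin> \<sigma> \<and> \<sigma> \<in> ?D \<and> card \<sigma> = j" by (rule D(5))
    moreover then have "insert x \<sigma> \<in> ?D" using ins_ic[of \<sigma> E S x] xS nx iso ic_sub by blast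
    ultimately show "\<sigma> \<in> ?D \<and> card \<sigma> = j \<and> x \<notin> \<sigma> \<and> insert x \<sigma> \<in> ?D" by simp
  qed
  show "\<exists>c. is_chain ?D (Suc j) c \<and> (\<forall>\<sigma>. boundary ?D c \<sigma> = z \<sigma>)"
  proof (intro exI conjI allI)
    show "is_chain ?D (Suc j) (cone x z0)" by (rule cone_chain[OF S supp])
    fix \<sigma>
    have CI: "boundary ?D (cone x z0) \<sigma> + cone x (boundary ?D z0) \<sigma> = z0 \<sigma>"
      by (rule cone_id[OF S]) (use supp in blast)
    have "cone x (boundary ?D z0) \<sigma> = - cone x w \<sigma>"
      by (simp add: cone_def D(4))
    then have "boundary ?D (cone x z0) \<sigma> = z0 \<sigma> + cone x w \<sigma>" using CI by (simp add: algebra_simps)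
    also have "\<dots> = z \<sigma>" using D(1) by metis
    finally show "boundary ?D (cone x z0) \<sigma> = z \<sigma>" .
  qed
qed


lemma dec_step:
  fixes K :: "'k::field itself"
  assumes S: "finite S" and xS: "x \<in> S" and sym: "\<forall>a b. E a b \<longrightarrow> E b a" and nx: "\<not> E x x"
    and A1: "acyc K E (S - {x}) (Suc i)"
    and A2: "acyc K E {v \<in> S. v \<noteq> x \<and> \<not> E x v} i"
  shows "acyc K E S (Suc i)"
  unfolding acyc_def
proof (intro allI impI, elim conjE)
  let ?D = "ind_complex E S"
  define N where "N = {v \<in> S. v \<noteq> x \<and> \<not> E x v}"
  let ?DN = "ind_complex E N"
  let ?Dx = "ind_complex E (S - {x})"
  have NS: "N \<subseteq> S" and Nx: "N \<subseteq> S - {x}" and xS': "S - {x} \<subseteq> S" by (auto simp: N_def)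
  fix z :: "'a set \<Rightarrow> 'k"
  assume zc: "is_chain ?D (Suc i) z" and zb: "\<forall>\<sigma>. boundary ?D z \<sigma> = 0"
  define z0 where "z0 = (\<lambda>\<sigma>. if x \<in> \<sigma> then 0 else z \<sigma>)"
  define w where "w = (\<lambda>\<rho>. if x \<in> \<rho> then 0 else sg x \<rho> * z (insert x \<rho>))"
  note D = decomp[OF S zc zb[rule_format] z0_def w_def]
  have wc: "is_chain ?DN i w"
    unfolding is_chain_def
  proof (intro allI impI)
    fix \<rho> assume "w \<rho> \<noteq> 0"
    from D(2)[OF this] have h: "x \<notin> \<rho>" "insert x \<rho> \<in> ?D" "Suc (card \<rho>) = i + 1" by auto
    then have "\<rho> \<in> ?DN" by (auto simp: ind_complex_def N_def)
    then show "\<rho> \<in> ?DN \<and> card \<rho> = i" using h by simp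
  qed
  have wb: "\<forall>\<sigma>. boundary ?DN w \<sigma> = 0"
    using D(3) bd_restrict[OF S NS wc] by metis
  obtain c1 where c1c: "is_chain ?DN (Suc i) c1" and c1b: "\<forall>\<sigma>. boundary ?DN c1 \<sigma> = w \<sigma>"
    using A2 wc wb unfolding acyc_def N_def by blast
  have c1b': "\<And>\<sigma>. boundary ?D c1 \<sigma> = w \<sigma>"
    using c1b bd_restrict[OF S NS c1c] by metis
  have c1s: "\<And>\<sigma>. c1 \<sigma> \<noteq> 0 \<Longrightarrow> \<sigma> \<in> ?D \<and> card \<sigma> = Suc i \<and> x \<notin> \<sigma> \<and> insert x \<sigma> \<in> ?D"
  proof -
    fix \<sigma> assume "c1 \<sigma> \<noteq> 0"
    then have h: "\<sigma> \<in> ?DN" "card \<sigma> = Suc i" using c1c by (auto simp: is_chain_def)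
    then have "\<sigma> \<in> ?D" using ic_mono[OF NS] by blast
    moreover have "x \<notin> \<sigma>" using h ic_sub N_def by fastforce
    moreover have "insert x \<sigma> \<in> ?D"
    proof (rule ins_ic[OF \<open>\<sigma> \<in> ?D\<close> xS nx])
      show "\<forall>v\<in>\<sigma>. \<not> E x v \<and> \<not> E v x" using ic_sub[OF h(1)] sym by (auto simp: N_def)
    qed
    ultimately show "\<sigma> \<in> ?D \<and> card \<sigma> = Suc i \<and> x \<notin> \<sigma> \<and> insert x \<sigma> \<in> ?D" using h by simp
  qed
  define z' where "z' = (\<lambda>\<sigma>. z0 \<sigma> + c1 \<sigma>)"
  have z'c: "is_chain ?Dx (Suc i) z'"
    unfolding is_chain_def
  proof (intro allI impI)
    fix \<sigma> assume "z' \<sigma> \<noteq> 0"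
    then have "z0 \<sigma> \<noteq> 0 \<or> c1 \<sigma> \<noteq> 0" by (auto simp: z'_def)
    then show "\<sigma> \<in> ?Dx \<and> card \<sigma> = Suc i"
    proof
      assume "z0 \<sigma> \<noteq> 0"
      from D(5)[OF this] show ?thesis by (auto simp: ind_complex_def)
    next
      assume "c1 \<sigma> \<noteq> 0"
      then have "\<sigma> \<in> ?DN" "card \<sigma> = Suc i" using c1c by (auto simp: is_chain_def)
      then show ?thesis using ic_mono[OF Nx] by blast
    qed
  qed
  have z'b: "\<forall>\<sigma>. boundary ?Dx z' \<sigma> = 0"
  proof
    fix \<sigma>
    have "boundary ?D z' \<sigma> = 0" unfolding z'_def bd_add D(4) c1b' by simp
    then show "boundary ?Dx z' \<sigma> = 0" using bd_restrict[OF S xS' z'c] by metis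
  qed
  obtain c2 where c2c: "is_chain ?Dx (Suc (Suc i)) c2" and c2b: "\<forall>\<sigma>. boundary ?Dx c2 \<sigma> = z' \<sigma>"
    using A1 z'c z'b unfolding acyc_def by blast
  have c2b': "\<And>\<sigma>. boundary ?D c2 \<sigma> = z' \<sigma>"
    using c2b bd_restrict[OF S xS' c2c] by metis
  show "\<exists>c. is_chain ?D (Suc (Suc i)) c \<and> (\<forall>\<sigma>. boundary ?D c \<sigma> = z \<sigma>)"
  proof (intro exI conjI allI)
    have cc: "is_chain ?D (Suc (Suc i)) (cone x c1)" by (rule cone_chain[OF S c1s])
    show "is_chain ?D (Suc (Suc i)) (\<lambda>\<sigma>. c2 \<sigma> - cone x c1 \<sigma>)"
      using chain_mono[OF c2c xS'] cc unfolding is_chain_def by (metis diff_zero diff_self)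
    fix \<sigma>
    have CI: "boundary ?D (cone x c1) \<sigma> + cone x (boundary ?D c1) \<sigma> = c1 \<sigma>"
      by (rule cone_id[OF S]) (use c1s in blast)
    have e: "cone x (boundary ?D c1) \<sigma> = cone x w \<sigma>" by (simp add: cone_def c1b')
    have "boundary ?D (\<lambda>\<sigma>. c2 \<sigma> - cone x c1 \<sigma>) \<sigma> = z' \<sigma> - (c1 \<sigma> - cone x w \<sigma>)"
      unfolding bd_diff c2b' using CI e by (simp add: algebra_simps)
    also have "\<dots> = z0 \<sigma> + cone x w \<sigma>" by (simp add: z'_def)
    also have "\<dots> = z \<sigma>" using D(1) by metis
    finally show "boundary ?D (\<lambda>\<sigma>. c2 \<sigma> - cone x c1 \<sigma>) \<sigma> = z \<sigma>" .
  qed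
qed


lemma acyc_empty:
  fixes K :: "'k::field itself"
  assumes "S = {}" "j \<ge> 1"
  shows "acyc K E S j"
  unfolding acyc_def
proof (intro allI impI, elim conjE)
  fix z :: "'a set \<Rightarrow> 'k"
  assume zc: "is_chain (ind_complex E S) j z"
  have z0: "\<And>\<sigma>. z \<sigma> = 0"
  proof (rule ccontr)
    fix \<sigma> assume "z \<sigma> \<noteq> 0"
    then have "\<sigma> \<in> ind_complex E S" "card \<sigma> = j" using zc by (auto simp: is_chain_def)
    then show False using assms ic_sub by fastforce
  qed
  show "\<exists>c. is_chain (ind_complex E S) (Suc j) c \<and> (\<forall>\<sigma>. boundary (ind_complex E S) c \<sigma> = z \<sigma>)"
    by (rule exI[of _ "\<lambda>_. 0"]) (simp add: is_chain_def bd_zero z0)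
qed

lemma acyc_edgeless:
  fixes K :: "'k::field itself"
  assumes "finite S" "\<forall>u\<in>S. \<forall>v\<in>S. \<not> E u v" "j \<ge> 1"
  shows "acyc K E S j"
proof (cases "S = {}")
  case True then show ?thesis using acyc_empty assms by blast
next
  case False
  then obtain x where "x \<in> S" by blast
  then show ?thesis using cone_case[OF assms(1) \<open>x \<in> S\<close>] assms(2) by blast
qed

lemma sg_facts:
  assumes "simple_graph V E"
  shows "\<forall>a b. E a b \<longrightarrow> E b a" "\<And>a. \<not> E a a" "finite V" "\<And>a b. E a b \<Longrightarrow> a \<in> V \<and> b \<in> V"
  using assms unfolding simple_graph_def by blast+

lemma lemB:
  fixes K :: "'k::field itself" and E :: "'a::linorder \<Rightarrow> 'a \<Rightarrow> bool"
  assumes G: "simple_graph V E" and F: "twoK2_free V E"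
  shows "S \<subseteq> V \<Longrightarrow> A \<subseteq> S \<Longrightarrow> (\<forall>a\<in>S-A. \<forall>b\<in>S-A. \<not> E a b) \<Longrightarrow> card A + 3 \<le> 2*j \<Longrightarrow> acyc K E S j"
proof (induction "card S" arbitrary: S A j rule: less_induct)
  case less
  note sym = sg_facts(1)[OF G] and irr = sg_facts(2)[OF G]
  have finS: "finite S" using less.prems(1) sg_facts(3)[OF G] finite_subset by blast
  have finA: "finite A" using less.prems(2) finS finite_subset by blast
  have j2: "j \<ge> 2" using less.prems(4) by simp
  show ?case
  proof (cases "S = {}")
    case True then show ?thesis using acyc_empty[of S j K E] j2 by simp
  next
    case Sne: False
    show ?thesis
    proof (cases "\<exists>x\<in>S. \<forall>v\<in>S. \<not> E x v")
      case True
      then obtain x where "x \<in> S" "\<forall>v\<in>S. \<not> E x v" by blast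
      then show ?thesis using cone_case[OF finS \<open>x \<in> S\<close>] sym irr by blast
    next
      case False
      then have noiso: "\<forall>x\<in>S. \<exists>v\<in>S. E x v" by blast
      obtain i where ji: "j = Suc i" using j2 by (cases j) auto
      have A1: "acyc K E (S - {a}) (Suc i)" if "a \<in> A" for a
      proof -
        have "card (S - {a}) < card S" using that less.prems(2) finS by (meson card_Diff1_less subsetD)
        moreover have "A - {a} \<subseteq> S - {a}" using less.prems(2) by blast
        moreover have "\<forall>u\<in>(S - {a}) - (A - {a}). \<forall>v\<in>(S - {a}) - (A - {a}). \<not> E u v" using less.prems(3) by blast
        moreover have "card (A - {a}) + 3 \<le> 2 * Suc i" using less.prems(4) ji finA that by simp
        ultimately show ?thesis using less.hyps[of "S - {a}" "A - {a}" "Suc i"] less.prems(1) by blast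
      qed
      show ?thesis
      proof (cases "\<exists>a\<in>A. \<exists>a'\<in>A. E a a'")
        case True
        then obtain a a' where aa: "a \<in> A" "a' \<in> A" "E a a'" by blast
        define N where "N = {v \<in> S. v \<noteq> a \<and> \<not> E a v}"
        have "A \<inter> N \<subseteq> A - {a, a'}" using aa by (auto simp: N_def)
        moreover have "card (A - {a, a'}) + 2 = card A"
        proof -
          have aa': "a \<noteq> a'" using aa(3) irr by blast
          have sub: "{a, a'} \<subseteq> A" using aa by blast
          have c2: "card {a, a'} = 2" using aa' by simp
          have "card A \<ge> 2" using card_mono[OF finA sub] c2 by simp
          then show ?thesis using card_Diff_subset[OF _ sub] c2 by simp
        qed
        ultimately have cA: "card (A \<inter> N) + 2 \<le> card A"
          using card_mono[of "A - {a, a'}" "A \<inter> N"] finA by simp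
        have "card N < card S" using aa less.prems(2) finS by (intro psubset_card_mono) (auto simp: N_def)
        moreover have "A \<inter> N \<subseteq> N" by blast
        moreover have "\<forall>u\<in>N - A \<inter> N. \<forall>v\<in>N - A \<inter> N. \<not> E u v" using less.prems(3) by (auto simp: N_def)
        moreover have "card (A \<inter> N) + 3 \<le> 2 * i" using cA less.prems(4) ji by simp
        moreover have "N \<subseteq> V" using less.prems(1) by (auto simp: N_def)
        ultimately have A2: "acyc K E N i" using less.hyps[of N "A \<inter> N" i] by blast
        show ?thesis unfolding ji
          using dec_step[OF finS _ sym irr A1[OF aa(1)] A2[unfolded N_def]] aa(1) less.prems(2) by blast
      next
        case False
        then have Aind: "\<forall>a\<in>A. \<forall>b\<in>A. \<not> E a b" by blast
        define f where "f = (\<lambda>b. card {u \<in> S. E b u})"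
        obtain s t where st: "s \<in> S" "t \<in> S" "E s t" using Sne noiso by blast
        have Ane: "A \<noteq> {}" using st less.prems(3) by blast
        define m where "m = Max (f ` A)"
        have "m \<in> f ` A" unfolding m_def using finA Ane by (intro Max_in) auto
        then obtain a where a: "a \<in> A" "f a = m" by blast
        have amax: "\<forall>b\<in>A. f b \<le> f a" using a finA m_def by simp
        have nest: "\<forall>b\<in>A. \<forall>v\<in>S. E b v \<longrightarrow> E a v"
        proof (intro ballI impI, rule ccontr)
          fix b v assume b: "b \<in> A" "v \<in> S" "E b v" "\<not> E a v"
          have "\<exists>u\<in>S. E a u \<and> \<not> E b u"
          proof (rule ccontr)
            assume "\<not> ?thesis"
            then have "{u \<in> S. E a u} \<subset> {u \<in> S. E b u}" using b by blast
            then have "f a < f b" unfolding f_def using finS by (intro psubset_card_mono) auto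
            then show False using amax b by force
          qed
          then obtain u where u: "u \<in> S" "E a u" "\<not> E b u" by blast
          have uA: "u \<notin> A" using u Aind a by blast
          have vA: "v \<notin> A" using b Aind by blast
          have "\<not> E u v" using less.prems(3) u(1) b(2) uA vA by blast
          moreover have "\<not> E a b" using Aind a b by blast
          moreover have "\<not> E u b" using u sym by blast
          moreover have "distinct [a, u, b, v]" using u b irr uA vA a by auto
          moreover have "a \<in> V" "u \<in> V" "b \<in> V" "v \<in> V" using less.prems(1,2) a b u by auto
          ultimately have W: "distinct [a, u, b, v] \<and> E a u \<and> E b v \<and> \<not> E a b \<and> \<not> E a v \<and> \<not> E u b \<and> \<not> E u v"
            "a \<in> V" "u \<in> V" "b \<in> V" "v \<in> V" using u b by auto
          show False using F W unfolding twoK2_free_def by blast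
        qed
        define N where "N = {v \<in> S. v \<noteq> a \<and> \<not> E a v}"
        have "\<forall>u\<in>N. \<forall>v\<in>N. \<not> E u v"
        proof (intro ballI notI)
          fix u v assume uv: "u \<in> N" "v \<in> N" "E u v"
          then have "u \<in> A \<or> v \<in> A" using less.prems(3) by (auto simp: N_def)
          then show False
          proof
            assume "u \<in> A" then show False using nest uv by (auto simp: N_def)
          next
            assume "v \<in> A" then show False using nest uv sym by (auto simp: N_def)
          qed
        qed
        moreover have "finite N" using finS by (simp add: N_def)
        ultimately have A2: "acyc K E N i" using acyc_edgeless[of N E i K] ji j2 by simp
        show ?thesis unfolding ji
          using dec_step[OF finS _ sym irr A1[OF a(1)] A2[unfolded N_def]] a(1) less.prems(2) by blast
      qed
    qed
  qed
qed


lemma mainT: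
  fixes K :: "'k::field itself" and E :: "'a::linorder \<Rightarrow> 'a \<Rightarrow> bool"
  assumes G: "simple_graph V E" and F: "twoK2_free V E"
    and J: "max_privacy_degree V E + 5 \<le> 2*j"
  shows "S \<subseteq> V \<Longrightarrow> acyc K E S j"
proof (induction "card S" arbitrary: S rule: less_induct)
  case less
  note sym = sg_facts(1)[OF G] and irr = sg_facts(2)[OF G] and finV = sg_facts(3)[OF G]
  have finS: "finite S" using less.prems(1) finV finite_subset by blast
  have j3: "j \<ge> 3" using J by simp
  show ?case
  proof (cases "S = {}")
    case True then show ?thesis using acyc_empty[of S j K E] j3 by simp
  next
    case Sne: False
    show ?thesis
    proof (cases "\<exists>x\<in>S. \<forall>v\<in>S. \<not> E x v")
      case True
      then obtain x where "x \<in> S" "\<forall>v\<in>S. \<not> E x v" by blast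
      then show ?thesis using cone_case[OF finS \<open>x \<in> S\<close>] sym irr by blast
    next
      case False
      then obtain x y where xy: "x \<in> S" "y \<in> S" "E x y" using Sne by blast
      obtain i where ji: "j = Suc i" using j3 by (cases j) auto
      have A1: "acyc K E (S - {x}) j"
        using less.hyps[of "S - {x}"] less.prems xy(1) finS by (meson card_Diff1_less Diff_subset order_trans)
      define N where "N = {v \<in> S. v \<noteq> x \<and> \<not> E x v}"
      define A where "A = {v \<in> N. E y v}"
      have NV: "N \<subseteq> V" using less.prems by (auto simp: N_def)
      have AN: "A \<subseteq> N" by (auto simp: A_def)
      have ind: "\<forall>u\<in>N - A. \<forall>v\<in>N - A. \<not> E u v"
      proof (intro ballI notI)
        fix u v assume uv: "u \<in> N - A" "v \<in> N - A" "E u v"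
        have W: "distinct [x, y, u, v] \<and> E x y \<and> E u v \<and> \<not> E x u \<and> \<not> E x v \<and> \<not> E y u \<and> \<not> E y v"
          using uv xy irr unfolding N_def A_def by auto
        have "x \<in> V" "y \<in> V" "u \<in> V" "v \<in> V" using uv xy less.prems unfolding N_def by auto
        then show False using F W unfolding twoK2_free_def by blast
      qed
      have cA: "card A \<le> max_privacy_degree V E"
      proof -
        let ?X = "closed_nbhd V E y - closed_nbhd V E x"
        have "A \<subseteq> ?X" using less.prems xy irr sym unfolding A_def N_def closed_nbhd_def by auto
        then have "card A \<le> card ?X" using finV by (intro card_mono) (auto simp: closed_nbhd_def)
        moreover have "card ?X \<in> {card (closed_nbhd V E x - closed_nbhd V E y) | x y. x \<in> V \<and> y \<in> V \<and> E x y}"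
          using xy sym less.prems by blast
        moreover have "finite ({0} \<union> {card (closed_nbhd V E x - closed_nbhd V E y) | x y. x \<in> V \<and> y \<in> V \<and> E x y})"
        proof (rule finite_subset[of _ "{..card V}"])
          show "{0} \<union> {card (closed_nbhd V E x - closed_nbhd V E y) | x y. x \<in> V \<and> y \<in> V \<and> E x y} \<subseteq> {..card V}"
          proof
            fix n assume "n \<in> {0} \<union> {card (closed_nbhd V E x - closed_nbhd V E y) | x y. x \<in> V \<and> y \<in> V \<and> E x y}"
            then show "n \<in> {..card V}"
            proof
              assume "n \<in> {card (closed_nbhd V E x - closed_nbhd V E y) | x y. x \<in> V \<and> y \<in> V \<and> E x y}"
              then obtain a b where ab: "n = card (closed_nbhd V E a - closed_nbhd V E b)" "a \<in> V" by blast
              have "closed_nbhd V E a - closed_nbhd V E b \<subseteq> V" using ab(2) by (auto simp: closed_nbhd_def)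
              then show ?thesis using ab(1) card_mono[OF finV] by auto
            qed simp
          qed
        qed simp
        ultimately show ?thesis unfolding max_privacy_degree_def
          by (meson Max_ge UnI2 order_trans)
      qed
      have A2: "acyc K E N i"
        using lemB[OF G F NV AN ind, of i K] cA J ji by simp
      show ?thesis unfolding ji
        using dec_step[OF finS xy(1) sym irr A1[unfolded ji] A2[unfolded N_def]] .
    qed
  qed
qed

lemma acyc_not_rhn:
  fixes K :: "'k::field itself"
  assumes S: "finite S" and A: "acyc K E S j"
  shows "\<not> red_hom_nonzero K (ind_complex E S) j"
proof
  let ?D = "ind_complex E S"
  assume "red_hom_nonzero K ?D j"
  then obtain z :: "'a set \<Rightarrow> 'k" where zc: "is_chain ?D j z"
    and zb: "\<forall>\<sigma>. card \<sigma> + 1 = j \<longrightarrow> boundary ?D z \<sigma> = 0"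
    and nb: "\<not> (\<exists>c :: 'a set \<Rightarrow> 'k. is_chain ?D (j + 1) c \<and> (\<forall>\<sigma>. card \<sigma> = j \<longrightarrow> z \<sigma> = boundary ?D c \<sigma>))"
    unfolding red_hom_nonzero_def by blast
  have "\<forall>\<sigma>. boundary ?D z \<sigma> = 0"
  proof
    fix \<sigma> show "boundary ?D z \<sigma> = 0"
    proof (cases j)
      case 0 then show ?thesis using bd_chain0[OF S] zc by blast
    next
      case (Suc i)
      then have "is_chain ?D i (boundary ?D z)" using bd_chain[OF S] zc by blast
      then show ?thesis using zb Suc unfolding is_chain_def by fastforce
    qed
  qed
  then obtain c where "is_chain ?D (Suc j) c" "\<forall>\<sigma>. boundary ?D c \<sigma> = z \<sigma>"
    using A zc unfolding acyc_def by blast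
  then show False using nb[unfolded Suc_eq_plus1[symmetric]] by (metis (no_types, lifting))
qed

theorem mainTheorem19:
  fixes V :: "'a::linorder set" and E :: "'a \<Rightarrow> 'a \<Rightarrow> bool"
  assumes "simple_graph V E"
    and "twoK2_free V E"
  shows "real (reg TYPE('k::field) V E) \<le> real (max_privacy_degree V E) / 2 + 2"
proof -
  let ?M = "{j. \<exists>S \<subseteq> V. red_hom_nonzero TYPE('k) (ind_complex E S) j}"
  have finV: "finite V" using sg_facts(3)[OF assms(1)] .
  have bnd: "\<forall>j\<in>?M. 2 * j \<le> max_privacy_degree V E + 4"
  proof
    fix j assume "j \<in> ?M"
    then obtain S where S: "S \<subseteq> V" "red_hom_nonzero TYPE('k) (ind_complex E S) j" by blast
    show "2 * j \<le> max_privacy_degree V E + 4"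
    proof (rule ccontr)
      assume "\<not> ?thesis"
      then have "max_privacy_degree V E + 5 \<le> 2 * j" by simp
      then have "acyc TYPE('k) E S j" using mainT[OF assms] S(1) by blast
      then show False using acyc_not_rhn[of S "TYPE('k)" E j] S finV finite_subset by blast
    qed
  qed
  have "reg TYPE('k) V E \<le> (max_privacy_degree V E + 4) div 2"
  proof (cases "?M = {}")
    case True then show ?thesis unfolding reg_def True by simp
  next
    case False
    show ?thesis unfolding reg_def
    proof (rule cSup_least[OF False])
      fix j assume "j \<in> ?M"
      then have "2 * j \<le> max_privacy_degree V E + 4" using bnd by blast
      then show "j \<le> (max_privacy_degree V E + 4) div 2" by simp
    qed
  qed
  then have "2 * reg TYPE('k) V E \<le> max_privacy_degree V E + 4" by simp
  then show ?thesis by linarith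
qed

end
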